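(* Let $n\ge1$, $\alpha\in[0,\pi/2]$, and let $p(a,b|x,y)$, $a,x\in\{0,1\}$, $y\in\{0,\dots,n-1\}$, $b\in\{0,1,\varnothing\}$, admit an LHS model for Alice's trusted measurements $\mathrm A^\alpha_{a|x}$, i.e. $p(a,b|x,y)=\sum_\lambda \mathrm{tr}(\mathrm A^\alpha_{a|x}\rho_\lambda)\,p(b|y,\lambda)$ for a finite family of positive semidefinite $2\times2$ matrices $\rho_\lambda$ with $\sum_\lambda\mathrm{tr}\rho_\lambda=1$ and conditional probabilities $p(b|y,\lambda)$. Then $$n\sin\left(\tfrac{\pi}{2n}\right)\mathcal W^\alpha_n\ \le\ \sqrt2\,\sin\left(\tfrac{\pi}{2}\mathcal T_n\right)\gamma(s_\alpha).$$
   Context: $Z,X$ denote the Pauli matrices on $\mathbb C^2$. For $\alpha\in[0,\pi/2]$ and $x\in\{0,1\}$: $A^\alpha_x:=\cos\alpha\,\frac{Z+X}{\sqrt2}+(-1)^x\sin\alpha\,\frac{Z-X}{\sqrt2}$ and $\mathrm A^\alpha_{a|x}:=\frac12(I+(-1)^aA^\alpha_x)$. $s_\alpha:=2(\cos\alpha+\sin\alpha)$, $\gamma(s):=\frac{s+\sqrt{8-s^2}}{4}$. With $\theta_y=y\pi/n$: $\mathcal W^\alpha_n:=\frac1n\sum_{y=0}^{n-1}\sum_{a,b\in\{0,1\}}(-1)^{a+b}\big(\cos\theta_y\,p(a,b|0,y)+\sin\theta_y\,p(a,b|1,y)\big)$ and $\mathcal T_n:=\frac1n\sum_{y=0}^{n-1}\sum_{b\in\{0,1\}}p(b|y)$,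 where $p(b|y)=\sum_a p(a,b|x,y)$. *)

theory Defs
  imports "HOL-Analysis.Analysis"
begin

text \<open>2x2 complex matrices are represented as complex^2^2; indices of type 2 are 0 and 1.\<close>

definition pauliZ :: "complex^2^2" where
  "pauliZ = (\<chi> i j. if i = j then (if i = 0 then 1 else -1) else 0)"

definition pauliX :: "complex^2^2" where
  "pauliX = (\<chi> i j. if i = j then 0 else 1)"

definition obsA :: "real \<Rightarrow> nat \<Rightarrow> complex^2^2" where
  "obsA \<alpha> x = (cos \<alpha> / sqrt 2) *\<^sub>R (pauliZ + pauliX)
              + ((-1) ^ x * sin \<alpha> / sqrt 2) *\<^sub>R (pauliZ - pauliX)"

definition effA :: "real \<Rightarrow> nat \<Rightarrow> nat \<Rightarrow> complex^2^2" where
  "effA \<alpha> a x = (1/2) *\<^sub>R (mat 1 + ((-1) ^ a) *\<^sub>R obsA \<alpha> x)"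

definition psd2 :: "complex^2^2 \<Rightarrow> bool" where
  "psd2 \<rho> \<longleftrightarrow> (\<forall>v :: complex^2.
      let q = (\<Sum>i\<in>UNIV. \<Sum>j\<in>UNIV. cnj (v$i) * \<rho>$i$j * v$j) in Im q = 0 \<and> Re q \<ge> 0)"

definition s_alpha :: "real \<Rightarrow> real" where
  "s_alpha \<alpha> = 2 * (cos \<alpha> + sin \<alpha>)"

definition gamma_fn :: "real \<Rightarrow> real" where
  "gamma_fn s = (s + sqrt (8 - s^2)) / 4"

text \<open>Behaviour p a b x y = p(a,b|x,y); outcome b = 2 encodes the no-click outcome \<emptyset>.\<close>

definition Wn :: "nat \<Rightarrow> (nat \<Rightarrow> nat \<Rightarrow> nat \<Rightarrow> nat \<Rightarrow> real) \<Rightarrow> real" where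
  "Wn n p = (1 / real n) * (\<Sum>y<n. \<Sum>a\<in>{0,1::nat}. \<Sum>b\<in>{0,1::nat}.
      (-1) ^ (a + b) * (cos (real y * pi / real n) * p a b 0 y
                       + sin (real y * pi / real n) * p a b 1 y))"

text \<open>Bob's marginal p(b|y) = sum_a p(a,b|x,y), taken at x = 0 (x-independent under an LHS model).\<close>
definition Tn :: "nat \<Rightarrow> (nat \<Rightarrow> nat \<Rightarrow> nat \<Rightarrow> nat \<Rightarrow> real) \<Rightarrow> real" where
  "Tn n p = (1 / real n) * (\<Sum>y<n. \<Sum>b\<in>{0,1::nat}. \<Sum>a\<in>{0,1::nat}. p a b 0 y)"

end

theory Submission
  imports Defs
begin


lemma sin_diff_le:
  fixes x y c :: real
  assumes "x \<le> y" and "\<And>z. x \<le> z \<Longrightarrow> z \<le> y \<Longrightarrow> cos z \<le> c"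
  shows "sin y - sin x \<le> c * (y - x)"
proof (cases "x = y")
  case True then show ?thesis by simp
next
  case False
  then have "x < y" using assms by simp
  from MVT2[OF this, of sin cos] obtain z where z: "x < z" "z < y" "sin y - sin x = (y - x) * cos z"
    by (auto intro: derivative_eq_intros)
  have "cos z \<le> c" using assms z by auto
  then show ?thesis using z \<open>x<y\<close> by (simp add: mult.commute mult_left_mono)
qed

lemma sin_diff_ge:
  fixes x y c :: real
  assumes "x \<le> y" and "\<And>z. x \<le> z \<Longrightarrow> z \<le> y \<Longrightarrow> c \<le> cos z"
  shows "c * (y - x) \<le> sin y - sin x"
proof (cases "x = y")
  case True then show ?thesis by simp
next
  case False
  then have "x < y" using assms by simp
  from MVT2[OF this, of sin cos] obtain z where z: "x < z" "z < y" "sin y - sin x = (y - x) * cos z"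
    by (auto intro: derivative_eq_intros)
  have "c \<le> cos z" using assms z by auto
  then show ?thesis using z \<open>x<y\<close> by (simp add: mult.commute mult_left_mono)
qed

lemma cos_le_cos_a:
  fixes a z :: real
  assumes "0 \<le> a" "a \<le> pi/2" "a \<le> \<bar>z\<bar>" "\<bar>z\<bar> \<le> 2*pi - a"
  shows "cos z \<le> cos a"
proof -
  have "cos z = cos \<bar>z\<bar>" by (simp add: abs_if)
  moreover have "cos \<bar>z\<bar> \<le> cos a"
  proof (cases "\<bar>z\<bar> \<le> pi")
    case True then show ?thesis using assms by (intro cos_monotone_0_pi_le) auto
  next
    case False
    have "cos \<bar>z\<bar> = cos (2*pi - \<bar>z\<bar>)" by (simp add: cos_diff)
    also have "\<dots> \<le> cos a" using assms False by (intro cos_monotone_0_pi_le) auto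
    finally show ?thesis .
  qed
  ultimately show ?thesis by simp
qed



definition clampa :: "real \<Rightarrow> real \<Rightarrow> real" where
  "clampa a t = max (-a) (min a t)"

definition pfun :: "real \<Rightarrow> real \<Rightarrow> real" where
  "pfun a t = sin (clampa a t) - clampa a t * cos a"

lemma cos_ge_cos_a:
  fixes a z :: real
  assumes "0 \<le> a" "a \<le> pi/2" "\<bar>z\<bar> \<le> a"
  shows "cos a \<le> cos z"
proof -
  have "cos z = cos \<bar>z\<bar>" by (simp add: abs_if)
  moreover have "cos a \<le> cos \<bar>z\<bar>" using assms by (intro cos_monotone_0_pi_le) auto
  ultimately show ?thesis by simp
qed

lemma pfun_mono:
  assumes "0 \<le> a" "a \<le> pi/2" "x \<le> y"
  shows "pfun a x \<le> pfun a y"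
proof -
  let ?u = "clampa a x" and ?v = "clampa a y"
  have uv: "?u \<le> ?v" "-a \<le> ?u" "?v \<le> a" using assms by (auto simp: clampa_def)
  have "cos a * (?v - ?u) \<le> sin ?v - sin ?u"
    using uv assms by (intro sin_diff_ge cos_ge_cos_a) auto
  then show ?thesis unfolding pfun_def by (simp add: algebra_simps)
qed

lemma pfun_bound:
  assumes "0 \<le> a" "a \<le> pi/2"
  shows "pfun a y - pfun a x \<le> 2 * (sin a - a * cos a)"
proof -
  have "pfun a y \<le> pfun a a" using pfun_mono[OF assms, of y a] pfun_mono[OF assms, of a y]
    by (cases "y \<le> a") (auto simp: pfun_def clampa_def)
  moreover have "pfun a (-a) \<le> pfun a x" using pfun_mono[OF assms, of x "-a"] pfun_mono[OF assms, of "-a" x]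
    by (cases "-a \<le> x") (auto simp: pfun_def clampa_def)
  moreover have "pfun a a = sin a - a * cos a" using assms by (simp add: pfun_def clampa_def)
  moreover have "pfun a (-a) = -(sin a - a * cos a)" using assms by (simp add: pfun_def clampa_def)
  ultimately show ?thesis by (smt (verit))
qed

lemma KI:
  assumes "0 \<le> a" "a \<le> pi/2" "-2*pi + a \<le> x" "x \<le> y" "y \<le> 2*pi - a"
  shows "sin y - sin x \<le> pfun a y - pfun a x + cos a * (y - x)"
proof -
  have left: "sin x2 - sin x1 \<le> cos a * (x2 - x1)" if "-2*pi + a \<le> x1" "x1 \<le> x2" "x2 \<le> -a" for x1 x2
    using that assms by (intro sin_diff_le cos_le_cos_a) auto
  have right: "sin x2 - sin x1 \<le> cos a * (x2 - x1)" if "a \<le> x1" "x1 \<le> x2" "x2 \<le> 2*pi-a" for x1 x2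
    using that assms by (intro sin_diff_le cos_le_cos_a) auto
  show ?thesis
  proof (cases "y \<le> -a")
    case True
    then have "pfun a y = pfun a x" using assms by (simp add: pfun_def clampa_def)
    then show ?thesis using left[of x y] True assms by simp
  next
    case ny: False
    show ?thesis
    proof (cases "a \<le> x")
      case True
      then have "pfun a y = pfun a x" using assms by (simp add: pfun_def clampa_def)
      then show ?thesis using right[of x y] True assms by simp
    next
      case nx: False
      define x' where "x' = max x (-a)"
      define y' where "y' = min y a"
      have cx: "clampa a x = x'" using nx assms by (simp add: clampa_def x'_def)
      have cy: "clampa a y = y'" using ny assms by (simp add: clampa_def y'_def)
      have m: "sin y' - sin x' = pfun a y - pfun a x + cos a * (y' - x')"
        unfolding pfun_def cx cy by (simp add: algebra_simps)
      have l: "sin x' - sin x \<le> cos a * (x' - x)"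
        using left[of x "-a"] assms by (cases "x \<le> -a") (auto simp: x'_def)
      have r: "sin y - sin y' \<le> cos a * (y - y')"
        using right[of a y] assms by (cases "a \<le> y") (auto simp: y'_def)
      have "sin y - sin x = (sin y - sin y') + (sin y' - sin x') + (sin x' - sin x)" by simp
      also have "\<dots> \<le> cos a * (y - y') + (pfun a y - pfun a x + cos a * (y' - x')) + cos a * (x' - x)"
        using l r m by linarith
      also have "\<dots> = pfun a y - pfun a x + cos a * (y - x)" by (simp add: algebra_simps)
      finally show ?thesis .
    qed
  qed
qed



lemma CL3:
  fixes N :: nat and h k a \<beta> :: real and w :: "nat \<Rightarrow> real"
  assumes N: "N \<ge> 2" and h: "h = 2*pi / N" and a: "a = h * k / 2" and k: "0 \<le> k" and api: "a \<le> pi/2"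
    and w: "\<And>i. i < N \<Longrightarrow> 0 \<le> w i \<and> w i \<le> 1" and ws: "(\<Sum>i<N. w i) \<le> k"
    and b1: "a - h/2 \<le> \<beta>" and b2: "\<beta> \<le> 2*pi - a - h/2"
  shows "(\<Sum>i<N. w i * cos (real i * h - \<beta>)) * (2 * sin (h/2)) \<le> 2 * sin a"
proof -
  define x where "x i = real i * h - \<beta> - h/2" for i :: nat
  have hpos: "0 < h" using N h by simp
  have a0: "0 \<le> a" unfolding a using hpos k by simp
  have Nh: "real N * h = 2*pi" using N h by simp
  have xs: "x (Suc i) = x i + h" for i by (simp add: x_def algebra_simps)
  have cs: "w i * cos (real i * h - \<beta>) * (2 * sin (h/2)) = w i * (sin (x (Suc i)) - sin (x i))" for i
  proof -
    have "sin (x (Suc i)) - sin (x i) = sin ((real i * h - \<beta>) + h/2) - sin ((real i * h - \<beta>) - h/2)"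
      by (simp add: x_def algebra_simps)
    also have "\<dots> = 2 * cos (real i * h - \<beta>) * sin (h/2)"
      by (simp only: sin_add sin_diff)
    finally show ?thesis by simp
  qed
  have xlo: "-2*pi + a \<le> x i" for i
  proof -
    have "x 0 \<le> x i" using hpos by (simp add: x_def)
    then show ?thesis using b2 by (simp add: x_def)
  qed
  have xhi: "x i \<le> 2*pi - a" if "i \<le> N" for i
  proof -
    have "x i \<le> x N" using hpos that by (simp add: x_def)
    also have "x N = 2*pi - \<beta> - h/2" using Nh by (simp add: x_def)
    finally show ?thesis using b1 by simp
  qed
  have step: "w i * (sin (x (Suc i)) - sin (x i)) \<le> (pfun a (x (Suc i)) - pfun a (x i)) + cos a * h * w i"
    if "i < N" for i
  proof -
    have ki: "sin (x (Suc i)) - sin (x i) \<le> pfun a (x (Suc i)) - pfun a (x i) + cos a * h"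
      using KI[OF a0 api xlo[of i], of "x (Suc i)"] xhi[of "Suc i"] that xs hpos by simp
    have D: "0 \<le> pfun a (x (Suc i)) - pfun a (x i)"
      using pfun_mono[OF a0 api, of "x i" "x (Suc i)"] xs hpos by simp
    have wi: "0 \<le> w i" "w i \<le> 1" using w that by auto
    have "w i * (sin (x (Suc i)) - sin (x i)) \<le> w i * (pfun a (x (Suc i)) - pfun a (x i) + cos a * h)"
      using ki wi by (intro mult_left_mono) auto
    also have "\<dots> = w i * (pfun a (x (Suc i)) - pfun a (x i)) + cos a * h * w i"
      by (simp add: algebra_simps)
    also have "\<dots> \<le> (pfun a (x (Suc i)) - pfun a (x i)) + cos a * h * w i"
      using D wi mult_right_mono[OF wi(2) D] by simp
    finally show ?thesis .
  qed
  have "(\<Sum>i<N. w i * cos (real i * h - \<beta>)) * (2 * sin (h/2))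
      = (\<Sum>i<N. w i * (sin (x (Suc i)) - sin (x i)))"
    by (simp add: sum_distrib_right cs)
  also have "\<dots> \<le> (\<Sum>i<N. (pfun a (x (Suc i)) - pfun a (x i)) + cos a * h * w i)"
    by (intro sum_mono step) auto
  also have "\<dots> = (pfun a (x N) - pfun a (x 0)) + cos a * h * (\<Sum>i<N. w i)"
    by (simp add: sum.distrib sum_lessThan_telescope[where f="\<lambda>i. pfun a (x i)"] sum_distrib_left)
  also have "\<dots> \<le> 2 * (sin a - a * cos a) + cos a * h * k"
  proof -
    have "cos a \<ge> 0" using a0 api by (intro cos_ge_zero) auto
    then have "cos a * h * (\<Sum>i<N. w i) \<le> cos a * h * k"
      using ws hpos by (intro mult_left_mono) auto
    then show ?thesis using pfun_bound[OF a0 api, of "x N" "x 0"] by linarith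
  qed
  also have "\<dots> = 2 * sin a" using a by (simp add: algebra_simps)
  finally show ?thesis .
qed



lemma sum_rotate:
  fixes N :: nat and m :: int and g :: "nat \<Rightarrow> 'b::comm_monoid_add"
  assumes "0 < N"
  shows "(\<Sum>j<N. g j) = (\<Sum>i<N. g (nat ((int i + m) mod int N)))"
proof (rule sum.reindex_bij_witness[where i="\<lambda>i. nat ((int i + m) mod int N)" and j="\<lambda>j. nat ((int j - m) mod int N)"])
  fix a assume "a \<in> {..<N}"
  then show "nat ((int (nat ((int a - m) mod int N)) + m) mod int N) = a"
    using assms by (simp add: mod_add_left_eq)
next
  fix a assume "a \<in> {..<N}"
  then show "nat ((int a - m) mod int N) \<in> {..<N}" using assms
    by (simp add: nat_less_iff)
next
  fix b assume "b \<in> {..<N}"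
  then show "nat ((int (nat ((int b + m) mod int N)) - m) mod int N) = b"
    using assms by (simp add: mod_diff_left_eq)
next
  fix b assume "b \<in> {..<N}"
  then show "nat ((int b + m) mod int N) \<in> {..<N}" using assms
    by (simp add: nat_less_iff)
next
  fix a assume "a \<in> {..<N}"
  then show "g (nat ((int (nat ((int a - m) mod int N)) + m) mod int N)) = g a"
    using assms by (simp add: mod_add_left_eq)
qed

lemma CL2:
  fixes N :: nat and h k a \<beta> :: real and w :: "nat \<Rightarrow> real"
  assumes N: "N \<ge> 2" and h: "h = 2*pi / N" and a: "a = h * k / 2" and k: "0 \<le> k" and api: "a \<le> pi/2"
    and w: "\<And>i. i < N \<Longrightarrow> 0 \<le> w i \<and> w i \<le> 1" and ws: "(\<Sum>i<N. w i) \<le> k"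
  shows "(\<Sum>i<N. w i * cos (real i * h - \<beta>)) * (2 * sin (h/2)) \<le> 2 * sin a"
proof -
  have hpos: "0 < h" using N h by simp
  have hpi: "h \<le> pi"
  proof -
    have "2 * pi / real N \<le> 2 * pi / 2" using N by (intro divide_left_mono) auto
    then show ?thesis using h by simp
  qed
  define m where "m = \<lfloor>(\<beta> - a + h/2) / h\<rfloor>"
  define \<beta>' where "\<beta>' = \<beta> - of_int m * h"
  have m1: "of_int m * h \<le> \<beta> - a + h/2"
  proof -
    have "of_int m \<le> (\<beta> - a + h/2) / h" unfolding m_def by (rule of_int_floor_le)
    then have "of_int m * h \<le> (\<beta> - a + h/2) / h * h" using hpos by (intro mult_right_mono) auto
    then show ?thesis using hpos by simp
  qed
  have m2: "\<beta> - a + h/2 < (of_int m + 1) * h"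
  proof -
    have "(\<beta> - a + h/2) / h < of_int m + 1" unfolding m_def by (rule real_of_int_floor_add_one_gt)
    then have "(\<beta> - a + h/2) / h * h < (of_int m + 1) * h" using hpos by (intro mult_strict_right_mono) auto
    then show ?thesis using hpos by simp
  qed
  have b1: "a - h/2 \<le> \<beta>'" using m1 by (simp add: \<beta>'_def)
  have b2: "\<beta>' \<le> 2*pi - a - h/2" using m2 api hpi by (simp add: \<beta>'_def algebra_simps)
  define \<sigma> where "\<sigma> i = nat ((int i + m) mod int N)" for i
  have N0: "0 < N" using N by simp
  have \<sigma>N: "\<sigma> i < N" for i unfolding \<sigma>_def using N0 by (simp add: nat_less_iff)
  have cosr: "cos (real (\<sigma> i) * h - \<beta>) = cos (real i * h - \<beta>')" for i
  proof -
    define d where "d = (int i + m) div int N"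
    have "int (\<sigma> i) = int i + m - int N * d"
    proof -
      have "int (\<sigma> i) = (int i + m) mod int N" unfolding \<sigma>_def using N0 by simp
      also have "\<dots> = int i + m - (int i + m) div int N * int N" by (simp add: minus_div_mult_eq_mod)
      finally show ?thesis by (simp add: d_def mult.commute)
    qed
    then have E: "real (\<sigma> i) = real i + of_int m - real N * of_int d"
      by (metis of_int_diff of_int_add of_int_mult of_int_of_nat_eq)
    have "real (\<sigma> i) * h = real i * h + of_int m * h - of_int d * (real N * h)"
    proof -
      have "real (\<sigma> i) * h = (real i + of_int m - real N * of_int d) * h" using E by simp
      then show ?thesis by (simp add: algebra_simps)
    qed
    moreover have "real N * h = 2 * pi" using h N0 by simp
    ultimately have "real (\<sigma> i) * h = real i * h + of_int m * h - of_int d * (2*pi)"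
      by simp
    then have "real (\<sigma> i) * h - \<beta> = (real i * h - \<beta>') - (2*pi) * of_int d"
      by (simp add: \<beta>'_def algebra_simps)
    then show ?thesis by (simp only: cos_diff cos_int_2pin sin_int_2pin) simp
  qed
  have "(\<Sum>i<N. w i * cos (real i * h - \<beta>)) = (\<Sum>i<N. w (\<sigma> i) * cos (real (\<sigma> i) * h - \<beta>))"
    unfolding \<sigma>_def by (rule sum_rotate[OF N0])
  also have "\<dots> = (\<Sum>i<N. w (\<sigma> i) * cos (real i * h - \<beta>'))" by (simp add: cosr)
  finally have eq: "(\<Sum>i<N. w i * cos (real i * h - \<beta>)) = (\<Sum>i<N. w (\<sigma> i) * cos (real i * h - \<beta>'))" .
  have ws': "(\<Sum>i<N. w (\<sigma> i)) \<le> k" using ws sum_rotate[OF N0, of w m] unfolding \<sigma>_def by simp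
  show ?thesis unfolding eq
    by (rule CL3[OF N h a k api _ ws' b1 b2]) (use w \<sigma>N in auto)
qed


lemma sum_split_add:
  fixes f :: "nat \<Rightarrow> real"
  shows "(\<Sum>j<n+m. f j) = (\<Sum>j<n. f j) + (\<Sum>j<m. f (n+j))"
  by (induct m) (simp_all add: add.assoc)

lemma CL:
  fixes n :: nat and E t :: "nat \<Rightarrow> real" and A B :: real
  assumes n: "n \<ge> 1" and Et: "\<And>y. y < n \<Longrightarrow> \<bar>E y\<bar> \<le> t y \<and> t y \<le> 1"
  shows "sin (pi / (2 * real n)) * (\<Sum>y<n. E y * (A * cos (real y * pi / real n) + B * sin (real y * pi / real n)))
     \<le> sqrt (A^2 + B^2) * sin (pi / (2 * real n) * (\<Sum>y<n. t y))"
proof -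
  define K where "K = (\<Sum>y<n. t y)"
  define R where "R = sqrt (A^2 + B^2)"
  define h where "h = pi / real n"
  have K0: "0 \<le> K" unfolding K_def
  proof (intro sum_nonneg)
    fix y assume "y \<in> {..<n}" then show "0 \<le> t y" using Et[of y] by auto
  qed
  have Kn: "K \<le> real n" unfolding K_def using sum_mono[of "{..<n}" t "\<lambda>_. 1"] Et by simp
  have a_le: "h * K / 2 \<le> pi/2"
  proof -
    have "h * K \<le> h * real n" using Kn n by (intro mult_left_mono) (auto simp: h_def)
    also have "h * real n = pi" using n by (simp add: h_def)
    finally show ?thesis by simp
  qed
  have rhs_eq: "pi / (2 * real n) * K = h * K / 2" by (simp add: h_def)
  show ?thesis
  proof (cases "R = 0")
    case True
    then have "A = 0" "B = 0" unfolding R_def by auto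
    then show ?thesis by simp
  next
    case False
    have Rpos: "0 < R" using False unfolding R_def by (simp add: sum_power2_gt_zero_iff)
    have S: "0 < A^2 + B^2" using Rpos unfolding R_def by simp
    have R2: "R^2 = A^2 + B^2" unfolding R_def by simp
    have "(A/R)^2 + (B/R)^2 = (A^2 + B^2) / R^2" by (simp add: power_divide add_divide_distrib)
    then have "(A/R)^2 + (B/R)^2 = 1" using S R2 by (simp del: divide_self_if) (auto split: if_splits)
    then obtain \<beta> where \<beta>: "A/R = cos \<beta>" "B/R = sin \<beta>" by (rule sincos_total_2pi)
    have AB: "A = R * cos \<beta>" "B = R * sin \<beta>" using \<beta> Rpos by (auto simp: field_simps)
    define w where "w j = (if j < n then max (E j) 0 else max (- E (j - n)) 0)" for j
    have tr: "A * cos (real y * pi / real n) + B * sin (real y * pi / real n) = R * cos (real y * h - \<beta>)" for y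
      by (simp add: AB cos_diff h_def algebra_simps)
    have cosn: "cos (real (n + y) * h - \<beta>) = - cos (real y * h - \<beta>)" for y
    proof -
      have "real (n + y) * h - \<beta> = (real y * h - \<beta>) + pi" using n by (simp add: h_def algebra_simps)
      then show ?thesis by (simp only: cos_add cos_pi sin_pi)
    qed
    have sumw: "(\<Sum>j<2*n. w j * cos (real j * h - \<beta>)) = (\<Sum>y<n. E y * cos (real y * h - \<beta>))"
    proof -
      have "(\<Sum>j<2*n. w j * cos (real j * h - \<beta>)) = (\<Sum>j<n+n. w j * cos (real j * h - \<beta>))" by (simp add: mult_2)
      also have "\<dots> = (\<Sum>y<n. w y * cos (real y * h - \<beta>)) + (\<Sum>y<n. w (n+y) * cos (real (n+y) * h - \<beta>))"
        by (rule sum_split_add)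
      also have "\<dots> = (\<Sum>y<n. (w y - w (n+y)) * cos (real y * h - \<beta>))"
        by (simp only: cosn) (simp add: sum_subtractf left_diff_distrib sum_negf)
      also have "\<dots> = (\<Sum>y<n. E y * cos (real y * h - \<beta>))"
        by (intro sum.cong) (auto simp: w_def)
      finally show ?thesis .
    qed
    have wsum: "(\<Sum>j<2*n. w j) \<le> K"
    proof -
      have "(\<Sum>j<2*n. w j) = (\<Sum>j<n+n. w j)" by (simp add: mult_2)
      also have "\<dots> = (\<Sum>y<n. w y) + (\<Sum>y<n. w (n+y))" by (rule sum_split_add)
      also have "\<dots> = (\<Sum>y<n. \<bar>E y\<bar>)" by (simp add: sum.distrib[symmetric] w_def) (intro sum.cong; auto)
      also have "\<dots> \<le> K" unfolding K_def using Et by (intro sum_mono) auto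
      finally show ?thesis .
    qed
    have wb: "0 \<le> w j \<and> w j \<le> 1" if "j < 2*n" for j
    proof (cases "j < n")
      case True then show ?thesis using Et[of j] by (auto simp: w_def)
    next
      case False
      then have "j - n < n" using that by simp
      then show ?thesis using Et[of "j - n"] False by (auto simp: w_def)
    qed
    have N2: "2 \<le> 2*n" using n by simp
    have h2: "h = 2*pi / real (2*n)" by (simp add: h_def)
    have main: "(\<Sum>j<2*n. w j * cos (real j * h - \<beta>)) * (2 * sin (h/2)) \<le> 2 * sin (h * K / 2)"
      by (rule CL2[OF N2 h2 refl K0 a_le wb wsum]) auto
    have "sin (pi / (2 * real n)) * (\<Sum>y<n. E y * (A * cos (real y * pi / real n) + B * sin (real y * pi / real n)))
        = R * ((\<Sum>j<2*n. w j * cos (real j * h - \<beta>)) * sin (h/2))"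
    proof -
      have s: "sin (pi / (2 * real n)) = sin (h/2)" by (simp add: h_def mult.commute)
      have "sin (pi / (2 * real n)) * (\<Sum>y<n. E y * (A * cos (real y * pi / real n) + B * sin (real y * pi / real n)))
          = sin (h/2) * (\<Sum>y<n. E y * (R * cos (real y * h - \<beta>)))" by (simp only: tr s)
      also have "\<dots> = R * ((\<Sum>y<n. E y * cos (real y * h - \<beta>)) * sin (h/2))"
        by (simp add: sum_distrib_left sum_distrib_right algebra_simps)
      also have "\<dots> = R * ((\<Sum>j<2*n. w j * cos (real j * h - \<beta>)) * sin (h/2))" by (simp only: sumw)
      finally show ?thesis .
    qed
    also have "\<dots> \<le> R * sin (h * K / 2)" using main Rpos by (intro mult_left_mono) auto
    finally show ?thesis unfolding R_def K_def[symmetric] rhs_eq .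
  qed
qed



lemma UNIV_2': "(UNIV::2 set) = {0,1}"
  using exhaust_2 by (metis (full_types) UNIV_2 insert_commute num1_eq1 one_neq_zero) 

lemma sum2: "(\<Sum>i\<in>(UNIV::2 set). f i) = f 0 + f 1"
  by (simp add: UNIV_2')

lemma effA_entries:
  "effA \<alpha> a x $ 0 $ 0 = of_real ((1 + (-1)^a * ((cos \<alpha> + (-1)^x * sin \<alpha>) / sqrt 2)) / 2)"
  "effA \<alpha> a x $ 1 $ 1 = of_real ((1 - (-1)^a * ((cos \<alpha> + (-1)^x * sin \<alpha>) / sqrt 2)) / 2)"
  "effA \<alpha> a x $ 0 $ 1 = of_real (((-1)^a * ((cos \<alpha> - (-1)^x * sin \<alpha>) / sqrt 2)) / 2)"
  "effA \<alpha> a x $ 1 $ 0 = of_real (((-1)^a * ((cos \<alpha> - (-1)^x * sin \<alpha>) / sqrt 2)) / 2)"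
  by (simp_all add: effA_def obsA_def pauliZ_def pauliX_def mat_def vector_scaleR_component)
     (simp_all add: scaleR_conv_of_real field_simps)

lemma trace_eff:
  "Re (trace (effA \<alpha> a x ** \<rho>)) = (1/2) * ((Re (\<rho>$0$0) + Re (\<rho>$1$1)) + (-1)^a *
     ((cos \<alpha> + (-1)^x * sin \<alpha>) / sqrt 2 * (Re (\<rho>$0$0) - Re (\<rho>$1$1))
      + (cos \<alpha> - (-1)^x * sin \<alpha>) / sqrt 2 * (Re (\<rho>$0$1) + Re (\<rho>$1$0))))"
  unfolding trace_def matrix_matrix_mult_def
  by (simp add: sum2 effA_entries) (simp add: algebra_simps add_divide_distrib diff_divide_distrib)

lemma psd_facts:
  assumes "psd2 \<rho>"
  shows "0 \<le> Re (\<rho>$0$0)" "0 \<le> Re (\<rho>$1$1)"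
    "(Re (\<rho>$0$0) - Re (\<rho>$1$1))^2 + (Re (\<rho>$0$1) + Re (\<rho>$1$0))^2 \<le> (Re (\<rho>$0$0) + Re (\<rho>$1$1))^2"
proof -
  define A where "A = Re (\<rho>$0$0)"
  define D where "D = Re (\<rho>$1$1)"
  define X where "X = Re (\<rho>$0$1) + Re (\<rho>$1$0)"
  have q: "0 \<le> A * t^2 + X * t * s + D * s^2" for t s :: real
  proof -
    define v :: "complex^2" where "v = (\<chi> i. if i = 0 then of_real t else of_real s)"
    have "0 \<le> Re (\<Sum>i\<in>UNIV. \<Sum>j\<in>UNIV. cnj (v$i) * \<rho>$i$j * v$j)"
      using assms unfolding psd2_def Let_def by blast
    also have "Re (\<Sum>i\<in>UNIV. \<Sum>j\<in>UNIV. cnj (v$i) * \<rho>$i$j * v$j) = A * t^2 + X * t * s + D * s^2"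
      by (simp add: sum2 v_def A_def D_def X_def power2_eq_square algebra_simps)
    finally show ?thesis .
  qed
  show "0 \<le> Re (\<rho>$0$0)" using q[of 1 0] by (simp add: A_def)
  show "0 \<le> Re (\<rho>$1$1)" using q[of 0 1] by (simp add: D_def)
  have A0: "0 \<le> A" using q[of 1 0] by simp
  have D0: "0 \<le> D" using q[of 0 1] by simp
  have "X^2 \<le> 4 * A * D"
  proof (cases "A = 0")
    case True
    then have "0 \<le> X * t + D" for t using q[of t 1] by simp
    note h = this
    have "X = 0"
    proof (rule ccontr)
      assume "X \<noteq> 0"
      then have "X * (-(D+1) / X) + D = -1" by simp
      then show False using h[of "-(D+1) / X"] by simp
    qed
    then show ?thesis using A0 D0 by simp
  next
    case False
    then have Ap: "0 < A" using A0 by simp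
    have "0 \<le> A * X^2 - 2 * A * X^2 + A * (4 * A * D)" using q[of "-X" "2*A"]
      by (simp add: power2_eq_square algebra_simps)
    then have "0 \<le> A * (4 * A * D - X^2)" by (simp add: algebra_simps)
    then show ?thesis using Ap by (simp add: zero_le_mult_iff)
  qed
  then show "(Re (\<rho>$0$0) - Re (\<rho>$1$1))^2 + (Re (\<rho>$0$1) + Re (\<rho>$1$0))^2 \<le> (Re (\<rho>$0$0) + Re (\<rho>$1$1))^2"
    unfolding A_def[symmetric] D_def[symmetric] X_def[symmetric] by (simp add: power2_eq_square algebra_simps)
qed


lemma gamma_eq:
  assumes "0 \<le> \<alpha>" "\<alpha> \<le> pi/2"
  shows "gamma_fn (s_alpha \<alpha>) = max (cos \<alpha>) (sin \<alpha>)"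
proof -
  have e8: "8 - (2 * (cos \<alpha> + sin \<alpha>))^2 = (2 * (cos \<alpha> - sin \<alpha>))^2"
    using sin_cos_squared_add[of \<alpha>] by algebra
  have "sqrt (8 - (s_alpha \<alpha>)^2) = 2 * \<bar>cos \<alpha> - sin \<alpha>\<bar>"
    unfolding s_alpha_def by (simp only: e8 real_sqrt_abs abs_mult)
  then show ?thesis unfolding gamma_fn_def s_alpha_def by (simp add: max_def abs_if)
qed

lemma AB_bound:
  fixes c s z x w :: real
  assumes cs: "c^2 + s^2 = 1" "0 \<le> c" "0 \<le> s" and zx: "z^2 + x^2 \<le> w^2" and w: "0 \<le> w"
  shows "sqrt (((c+s)/sqrt 2 * z + (c-s)/sqrt 2 * x)^2 + ((c-s)/sqrt 2 * z + (c+s)/sqrt 2 * x)^2)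
         \<le> sqrt 2 * max c s * w"
proof -
  have e: "((c+s)/sqrt 2 * z + (c-s)/sqrt 2 * x)^2 + ((c-s)/sqrt 2 * z + (c+s)/sqrt 2 * x)^2
        = (c^2+s^2) * (z^2 + x^2) + 2 * (c^2 - s^2) * z * x"
    by (simp add: power2_eq_square field_simps)
  have zx2: "2 * \<bar>z * x\<bar> \<le> z^2 + x^2"
    using sum_squares_bound[of "\<bar>z\<bar>" "\<bar>x\<bar>"] by (simp add: abs_mult power2_abs)
  have "2 * (c^2 - s^2) * z * x \<le> \<bar>c^2 - s^2\<bar> * (2 * \<bar>z * x\<bar>)"
  proof -
    have "2 * (c^2 - s^2) * z * x \<le> \<bar>2 * (c^2 - s^2) * z * x\<bar>" by (rule abs_ge_self)
    also have "\<dots> = \<bar>c^2 - s^2\<bar> * (2 * \<bar>z * x\<bar>)"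
      by (simp only: abs_mult mult.assoc)
    finally show ?thesis .
  qed
  also have "\<dots> \<le> \<bar>c^2 - s^2\<bar> * (z^2 + x^2)" using zx2 by (intro mult_left_mono) auto
  finally have "(c^2+s^2) * (z^2 + x^2) + 2 * (c^2 - s^2) * z * x \<le> (1 + \<bar>c^2 - s^2\<bar>) * (z^2+x^2)"
    using cs by (simp add: algebra_simps)
  also have "\<dots> \<le> (1 + \<bar>c^2 - s^2\<bar>) * w^2" using zx by (intro mult_left_mono) auto
  also have "1 + \<bar>c^2 - s^2\<bar> = 2 * (max c s)^2" using cs
    by (cases "c \<le> s") (auto simp: max_def abs_if power_mono, (smt (verit) power_mono)+)
  finally have "((c+s)/sqrt 2 * z + (c-s)/sqrt 2 * x)^2 + ((c-s)/sqrt 2 * z + (c+s)/sqrt 2 * x)^2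
      \<le> (sqrt 2 * max c s * w)^2" unfolding e by (simp add: power_mult_distrib)
  then show ?thesis
    using real_sqrt_le_mono by (metis real_sqrt_abs abs_of_nonneg w cs(2) max.coboundedI1 mult_nonneg_nonneg real_sqrt_ge_zero zero_le_numeral)
qed

lemma sin_tangent:
  assumes "0 \<le> u" "u \<le> pi" "0 \<le> u0" "u0 \<le> pi"
  shows "sin u \<le> sin u0 + cos u0 * (u - u0)"
proof (cases "u0 \<le> u")
  case True
  have "sin u - sin u0 \<le> cos u0 * (u - u0)"
    using True assms by (intro sin_diff_le cos_monotone_0_pi_le) auto
  then show ?thesis by simp
next
  case False
  have "cos u0 * (u0 - u) \<le> sin u0 - sin u"
    using False assms by (intro sin_diff_ge cos_monotone_0_pi_le) auto
  then show ?thesis by (simp add: algebra_simps)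
qed

lemma sin_jensen:
  fixes w u :: "'l \<Rightarrow> real"
  assumes "finite L" "\<And>l. l \<in> L \<Longrightarrow> 0 \<le> w l" "(\<Sum>l\<in>L. w l) = 1"
    "\<And>l. l \<in> L \<Longrightarrow> 0 \<le> u l \<and> u l \<le> pi"
  shows "(\<Sum>l\<in>L. w l * sin (u l)) \<le> sin (\<Sum>l\<in>L. w l * u l)"
proof -
  define u0 where "u0 = (\<Sum>l\<in>L. w l * u l)"
  have "0 \<le> u0" unfolding u0_def using assms by (intro sum_nonneg mult_nonneg_nonneg) auto
  have "u0 \<le> (\<Sum>l\<in>L. w l * pi)" unfolding u0_def using assms by (intro sum_mono mult_left_mono) auto
  then have "u0 \<le> pi" using assms(3) by (simp add: sum_distrib_right[symmetric])
  have "(\<Sum>l\<in>L. w l * sin (u l)) \<le> (\<Sum>l\<in>L. w l * (sin u0 + cos u0 * (u l - u0)))"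
    using assms \<open>0 \<le> u0\<close> \<open>u0 \<le> pi\<close> by (intro sum_mono mult_left_mono sin_tangent) auto
  also have "\<dots> = sin u0 * (\<Sum>l\<in>L. w l) + cos u0 * (\<Sum>l\<in>L. w l * u l) - cos u0 * u0 * (\<Sum>l\<in>L. w l)"
    by (simp add: sum.distrib sum_subtractf sum_distrib_left sum_distrib_right algebra_simps)
  also have "\<dots> = sin u0" using assms(3) by (simp add: u0_def)
  finally show ?thesis unfolding u0_def .
qed



lemma swap_lin:
  fixes k :: "nat \<Rightarrow> nat \<Rightarrow> real" and g :: "nat \<Rightarrow> nat \<Rightarrow> nat \<Rightarrow> 'l \<Rightarrow> real"
  assumes "finite L"
  shows "(\<Sum>a\<in>A. \<Sum>b\<in>B. k a b * (C * (\<Sum>l\<in>L. g a b 0 l) + S * (\<Sum>l\<in>L. g a b 1 l)))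
       = (\<Sum>l\<in>L. \<Sum>a\<in>A. \<Sum>b\<in>B. k a b * (C * g a b 0 l + S * g a b 1 l))"
proof -
  have "(\<Sum>l\<in>L. \<Sum>a\<in>A. \<Sum>b\<in>B. k a b * (C * g a b 0 l + S * g a b 1 l))
      = (\<Sum>a\<in>A. \<Sum>l\<in>L. \<Sum>b\<in>B. k a b * (C * g a b 0 l + S * g a b 1 l))" by (rule sum.swap)
  also have "\<dots> = (\<Sum>a\<in>A. \<Sum>b\<in>B. \<Sum>l\<in>L. k a b * (C * g a b 0 l + S * g a b 1 l))"
    by (intro sum.cong refl sum.swap)
  also have "\<dots> = (\<Sum>a\<in>A. \<Sum>b\<in>B. k a b * (C * (\<Sum>l\<in>L. g a b 0 l) + S * (\<Sum>l\<in>L. g a b 1 l)))"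
    by (simp add: sum_distrib_left sum.distrib distrib_left)
  finally show ?thesis by simp
qed

lemma swap_lin2:
  fixes g :: "nat \<Rightarrow> nat \<Rightarrow> 'l \<Rightarrow> real"
  shows "(\<Sum>b\<in>B. \<Sum>a\<in>A. (\<Sum>l\<in>L. g a b l)) = (\<Sum>l\<in>L. \<Sum>b\<in>B. \<Sum>a\<in>A. g a b l)"
proof -
  have "(\<Sum>l\<in>L. \<Sum>b\<in>B. \<Sum>a\<in>A. g a b l) = (\<Sum>b\<in>B. \<Sum>l\<in>L. \<Sum>a\<in>A. g a b l)" by (rule sum.swap)
  also have "\<dots> = (\<Sum>b\<in>B. \<Sum>a\<in>A. \<Sum>l\<in>L. g a b l)" by (intro sum.cong refl sum.swap)
  finally show ?thesis by simp
qed

theorem mainTheorem6: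
  fixes n :: nat and \<alpha> :: real
    and p :: "nat \<Rightarrow> nat \<Rightarrow> nat \<Rightarrow> nat \<Rightarrow> real"
    and \<Lambda> :: "'l set" and \<rho> :: "'l \<Rightarrow> complex^2^2"
    and q :: "'l \<Rightarrow> nat \<Rightarrow> nat \<Rightarrow> real"
  assumes "n \<ge> 1"
    and "0 \<le> \<alpha>" and "\<alpha> \<le> pi / 2"
    and "finite \<Lambda>"
    and "\<forall>l\<in>\<Lambda>. psd2 (\<rho> l)"
    and "(\<Sum>l\<in>\<Lambda>. trace (\<rho> l)) = 1"
    and "\<forall>l\<in>\<Lambda>. \<forall>y<n. (\<forall>b\<in>{0,1,2}. 0 \<le> q l y b) \<and> (\<Sum>b\<in>{0,1,2::nat}. q l y b) = 1"
    and "\<forall>a\<in>{0,1}. \<forall>b\<in>{0,1,2}. \<forall>x\<in>{0,1}. \<forall>y<n.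
           complex_of_real (p a b x y) = (\<Sum>l\<in>\<Lambda>. trace (effA \<alpha> a x ** \<rho> l) * complex_of_real (q l y b))"
  shows "real n * sin (pi / (2 * real n)) * Wn n p
           \<le> sqrt 2 * sin (pi / 2 * Tn n p) * gamma_fn (s_alpha \<alpha>)"
proof -
  note n = assms(1) and fin = assms(4) and psd = assms(5) and qprop = assms(7) and prep0 = assms(8)
  define c where "c = cos \<alpha>"
  define s where "s = sin \<alpha>"
  define Rr where "Rr l = Re (\<rho> l $0$0)" for l
  define Dd where "Dd l = Re (\<rho> l $1$1)" for l
  define Xx where "Xx l = Re (\<rho> l $0$1) + Re (\<rho> l $1$0)" for l
  define wt where "wt l = Rr l + Dd l" for l
  define zz where "zz l = Rr l - Dd l" for l
  define M where "M x l = (c + (-1)^x * s) / sqrt 2 * zz l + (c - (-1)^x * s) / sqrt 2 * Xx l" for x :: nat and l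
  have prep: "p a b x y = (\<Sum>l\<in>\<Lambda>. (1/2) * (wt l + (-1)^a * M x l) * q l y b)"
    if "a \<in> {0,1}" "b \<in> {0,1,2}" "x \<in> {0,1}" "y < n" for a b x y
  proof -
    have e: "complex_of_real (p a b x y) = (\<Sum>l\<in>\<Lambda>. trace (effA \<alpha> a x ** \<rho> l) * complex_of_real (q l y b))"
      using prep0 that by blast
    have "p a b x y = Re (complex_of_real (p a b x y))" by simp
    also have "\<dots> = Re (\<Sum>l\<in>\<Lambda>. trace (effA \<alpha> a x ** \<rho> l) * complex_of_real (q l y b))"
      by (simp only: e)
    also have "\<dots> = (\<Sum>l\<in>\<Lambda>. Re (trace (effA \<alpha> a x ** \<rho> l)) * q l y b)" by (simp add: Re_sum)
    also have "\<dots> = (\<Sum>l\<in>\<Lambda>. (1/2) * (wt l + (-1)^a * M x l) * q l y b)"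
      by (simp add: trace_eff M_def wt_def zz_def Xx_def Rr_def Dd_def c_def s_def)
    finally show ?thesis .
  qed
  have wt0: "0 \<le> wt l" if "l \<in> \<Lambda>" for l
    using psd_facts[of "\<rho> l"] psd that by (simp add: wt_def Rr_def Dd_def)
  have wt_sum: "(\<Sum>l\<in>\<Lambda>. wt l) = 1"
  proof -
    have "(\<Sum>l\<in>\<Lambda>. wt l) = Re (\<Sum>l\<in>\<Lambda>. trace (\<rho> l))"
      by (simp add: Re_sum trace_def sum2 wt_def Rr_def Dd_def)
    then show ?thesis using assms(6) by simp
  qed
  have zxw: "(zz l)^2 + (Xx l)^2 \<le> (wt l)^2" if "l \<in> \<Lambda>" for l
    using psd_facts(3)[of "\<rho> l"] psd that by (simp add: wt_def zz_def Xx_def Rr_def Dd_def)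
  define \<theta> where "\<theta> y = real y * pi / real n" for y :: nat
  define K where "K l = (\<Sum>y<n. q l y 0 + q l y 1)" for l
  have qb: "0 \<le> q l y 0" "0 \<le> q l y 1" "q l y 0 + q l y 1 \<le> 1" if "l \<in> \<Lambda>" "y < n" for l y
  proof -
    have h: "\<forall>b\<in>{0,1,2}. 0 \<le> q l y b" "(\<Sum>b\<in>{0,1,2::nat}. q l y b) = 1" using qprop that by auto
    then show "0 \<le> q l y 0" "0 \<le> q l y 1" by auto
    show "q l y 0 + q l y 1 \<le> 1" using h by simp
  qed
  have K0: "0 \<le> K l" "K l \<le> real n" if "l \<in> \<Lambda>" for l
  proof -
    show "0 \<le> K l" unfolding K_def using qb[OF that] by (intro sum_nonneg) (simp add: add_nonneg_nonneg)
    have "K l \<le> (\<Sum>y<n. 1)" unfolding K_def using qb[OF that] by (intro sum_mono) auto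
    then show "K l \<le> real n" by simp
  qed
  have Wy: "(\<Sum>a\<in>{0,1::nat}. \<Sum>b\<in>{0,1::nat}. (-1) ^ (a + b) * (cos (\<theta> y) * p a b 0 y + sin (\<theta> y) * p a b 1 y))
      = (\<Sum>l\<in>\<Lambda>. (q l y 0 - q l y 1) * (M 0 l * cos (\<theta> y) + M 1 l * sin (\<theta> y)))" if "y < n" for y
  proof -
    define g where "g a b x l = (1/2) * (wt l + (-1)^a * M x l) * q l y b" for a b x :: nat and l
    have "(\<Sum>a\<in>{0,1::nat}. \<Sum>b\<in>{0,1::nat}. (-1) ^ (a + b) * (cos (\<theta> y) * p a b 0 y + sin (\<theta> y) * p a b 1 y))
        = (\<Sum>a\<in>{0,1::nat}. \<Sum>b\<in>{0,1::nat}. (-1) ^ (a + b) * (cos (\<theta> y) * (\<Sum>l\<in>\<Lambda>. g a b 0 l) + sin (\<theta> y) * (\<Sum>l\<in>\<Lambda>. g a b 1 l)))"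
    proof (intro sum.cong refl)
      fix a b :: nat assume ab: "a \<in> {0,1}" "b \<in> {0,1}"
      have b3: "b \<in> {0,1,2}" using ab by auto
      have x0: "(0::nat) \<in> {0,1}" and x1: "(1::nat) \<in> {0,1}" by auto
      show "(-1) ^ (a + b) * (cos (\<theta> y) * p a b 0 y + sin (\<theta> y) * p a b 1 y)
          = (-1) ^ (a + b) * (cos (\<theta> y) * (\<Sum>l\<in>\<Lambda>. g a b 0 l) + sin (\<theta> y) * (\<Sum>l\<in>\<Lambda>. g a b 1 l))"
        unfolding g_def prep[OF ab(1) b3 x0 that] prep[OF ab(1) b3 x1 that] by (rule refl)
    qed
    also have "\<dots> = (\<Sum>l\<in>\<Lambda>. \<Sum>a\<in>{0,1::nat}. \<Sum>b\<in>{0,1::nat}. (-1) ^ (a + b) * (cos (\<theta> y) * g a b 0 l + sin (\<theta> y) * g a b 1 l))"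
      by (rule swap_lin[OF fin])
    also have "\<dots> = (\<Sum>l\<in>\<Lambda>. (q l y 0 - q l y 1) * (M 0 l * cos (\<theta> y) + M 1 l * sin (\<theta> y)))"
      by (intro sum.cong refl) (simp add: g_def algebra_simps)
    finally show ?thesis .
  qed
  have Ty: "(\<Sum>b\<in>{0,1::nat}. \<Sum>a\<in>{0,1::nat}. p a b 0 y) = (\<Sum>l\<in>\<Lambda>. wt l * (q l y 0 + q l y 1))" if "y < n" for y
  proof -
    define g where "g a b l = (1/2) * (wt l + (-1)^a * M 0 l) * q l y b" for a b :: nat and l
    have "(\<Sum>b\<in>{0,1::nat}. \<Sum>a\<in>{0,1::nat}. p a b 0 y) = (\<Sum>b\<in>{0,1::nat}. \<Sum>a\<in>{0,1::nat}. (\<Sum>l\<in>\<Lambda>. g a b l))"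
    proof (intro sum.cong refl)
      fix a b :: nat assume b: "b \<in> {0,1}" and a: "a \<in> {0,1}"
      have b3: "b \<in> {0,1,2}" using b by auto
      have x0: "(0::nat) \<in> {0,1}" by auto
      show "p a b 0 y = (\<Sum>l\<in>\<Lambda>. g a b l)"
        unfolding g_def prep[OF a b3 x0 that] by (rule refl)
    qed
    also have "\<dots> = (\<Sum>l\<in>\<Lambda>. \<Sum>b\<in>{0,1::nat}. \<Sum>a\<in>{0,1::nat}. g a b l)" by (rule swap_lin2)
    also have "\<dots> = (\<Sum>l\<in>\<Lambda>. wt l * (q l y 0 + q l y 1))"
      by (intro sum.cong refl) (simp add: g_def algebra_simps)
    finally show ?thesis .
  qed
  have Tval: "Tn n p = (\<Sum>l\<in>\<Lambda>. wt l * (K l / real n))"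
  proof -
    have "Tn n p = (1 / real n) * (\<Sum>y<n. \<Sum>l\<in>\<Lambda>. wt l * (q l y 0 + q l y 1))"
      unfolding Tn_def by (subst sum.cong[OF refl Ty]) auto
    also have "\<dots> = (\<Sum>l\<in>\<Lambda>. wt l * (K l / real n))"
      unfolding K_def by (subst sum.swap) (simp add: sum_distrib_left sum_divide_distrib add_divide_distrib, intro sum.cong refl, simp add: distrib_left add_divide_distrib)
    finally show ?thesis .
  qed
  have cs: "c^2 + s^2 = 1" "0 \<le> c" "0 \<le> s"
    using assms(2,3) by (auto simp: c_def s_def intro!: cos_ge_zero sin_ge_zero)
  have perl: "sin (pi / (2 * real n)) * (\<Sum>y<n. (q l y 0 - q l y 1) * (M 0 l * cos (\<theta> y) + M 1 l * sin (\<theta> y)))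
      \<le> sqrt 2 * max c s * (wt l * sin (pi / 2 * (K l / real n)))" if l: "l \<in> \<Lambda>" for l
  proof -
    have "sin (pi / (2 * real n)) * (\<Sum>y<n. (q l y 0 - q l y 1) * (M 0 l * cos (\<theta> y) + M 1 l * sin (\<theta> y)))
        \<le> sqrt ((M 0 l)^2 + (M 1 l)^2) * sin (pi / (2 * real n) * K l)"
      unfolding \<theta>_def K_def by (rule CL[OF n]) (use qb[OF l] in \<open>fastforce simp: abs_le_iff\<close>)
    also have "\<dots> \<le> (sqrt 2 * max c s * wt l) * sin (pi / (2 * real n) * K l)"
    proof (rule mult_right_mono)
      show "sqrt ((M 0 l)^2 + (M 1 l)^2) \<le> sqrt 2 * max c s * wt l"
        unfolding M_def using AB_bound[OF cs zxw[OF l] wt0[OF l]] by simp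
      have "0 \<le> pi / (2 * real n) * K l" using K0[OF l] by simp
      moreover have "pi / (2 * real n) * K l \<le> pi"
      proof -
        have "pi / (2 * real n) * K l \<le> pi / (2 * real n) * real n" using K0[OF l] by (intro mult_left_mono) auto
        also have "\<dots> \<le> pi" using n by simp
        finally show ?thesis .
      qed
      ultimately show "0 \<le> sin (pi / (2 * real n) * K l)" by (intro sin_ge_zero)
    qed
    also have "pi / (2 * real n) * K l = pi / 2 * (K l / real n)" by simp
    finally show ?thesis by (simp add: algebra_simps)
  qed
  have "real n * sin (pi / (2 * real n)) * Wn n p
      = sin (pi / (2 * real n)) * (\<Sum>y<n. \<Sum>l\<in>\<Lambda>. (q l y 0 - q l y 1) * (M 0 l * cos (\<theta> y) + M 1 l * sin (\<theta> y)))"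
  proof -
    have "Wn n p = (1 / real n) * (\<Sum>y<n. \<Sum>l\<in>\<Lambda>. (q l y 0 - q l y 1) * (M 0 l * cos (\<theta> y) + M 1 l * sin (\<theta> y)))"
      unfolding Wn_def \<theta>_def[symmetric] by (subst sum.cong[OF refl Wy]) auto
    then show ?thesis using n by simp
  qed
  also have "\<dots> = (\<Sum>l\<in>\<Lambda>. sin (pi / (2 * real n)) * (\<Sum>y<n. (q l y 0 - q l y 1) * (M 0 l * cos (\<theta> y) + M 1 l * sin (\<theta> y))))"
    by (subst sum.swap) (simp add: sum_distrib_left)
  also have "\<dots> \<le> (\<Sum>l\<in>\<Lambda>. sqrt 2 * max c s * (wt l * sin (pi / 2 * (K l / real n))))"
    by (intro sum_mono perl)
  also have "\<dots> = sqrt 2 * max c s * (\<Sum>l\<in>\<Lambda>. wt l * sin (pi / 2 * (K l / real n)))"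
    by (simp add: sum_distrib_left)
  also have "\<dots> \<le> sqrt 2 * max c s * sin (\<Sum>l\<in>\<Lambda>. wt l * (pi / 2 * (K l / real n)))"
  proof (rule mult_left_mono)
    show "(\<Sum>l\<in>\<Lambda>. wt l * sin (pi / 2 * (K l / real n))) \<le> sin (\<Sum>l\<in>\<Lambda>. wt l * (pi / 2 * (K l / real n)))"
    proof (rule sin_jensen[OF fin wt0 wt_sum])
      fix l assume l: "l \<in> \<Lambda>"
      have "K l / real n \<le> 1" using K0[OF l] n by (simp add: divide_le_eq_1)
      then have "pi / 2 * (K l / real n) \<le> pi / 2 * 1" by (intro mult_left_mono) auto
      moreover have "pi / 2 * 1 \<le> pi" by simp
      moreover have "0 \<le> pi / 2 * (K l / real n)" using K0[OF l] by simp
      ultimately show "0 \<le> pi / 2 * (K l / real n) \<and> pi / 2 * (K l / real n) \<le> pi" by linarith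
    qed auto
    show "0 \<le> sqrt 2 * max c s" using cs by simp
  qed
  also have "(\<Sum>l\<in>\<Lambda>. wt l * (pi / 2 * (K l / real n))) = pi / 2 * Tn n p"
    unfolding Tval by (simp add: sum_distrib_left algebra_simps)
  also have "max c s = gamma_fn (s_alpha \<alpha>)" using gamma_eq[OF assms(2,3)] by (simp add: c_def s_def)
  finally show ?thesis by (simp add: algebra_simps)
qed

end
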